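(* Let $V,W$ be finite-dimensional Hermitian vector spaces, $\tilde W=V\oplus V\oplus W$, and let $B_1,B_2\in\mathrm{End}(V)$, $i\in\mathrm{Hom}(W,V)$, $j\in\mathrm{Hom}(V,W)$ satisfy $[B_1,B_2]+ij=0$ and $[B_1,B_1^\dagger]+[B_2,B_2^\dagger]+ii^\dagger-j^\dagger j=0$. Let $\alpha_{\rm I}:V\otimes\mathfrak{M}^{\rm I}_q\to\tilde W\otimes\mathfrak{M}^{\rm I}_q$ and $\beta_{\rm I}:\tilde W\otimes\mathfrak{M}^{\rm I}_q\to V\otimes\mathfrak{M}^{\rm I}_q$ be the right-linear maps $$\alpha_{\rm I}=\begin{pmatrix}B_1\otimes 1-1\otimes x_{21'}\\ B_2\otimes1-1\otimes x_{22'}\\ j\otimes 1\end{pmatrix},\qquad \beta_{\rm I}=\begin{pmatrix}-B_2\otimes1+1\otimes x_{22'} & B_1\otimes1-1\otimes x_{21'} & i\otimes1\end{pmatrix}.$$ Then (1) $\alpha_{\rm I}$ is injective; (2) $\beta_{\rm I}$ is surjective if and only if $(B_1,B_2,i,j)$ is stable.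
   Context: $\mathfrak{M}^{\rm I}_q$ is the algebra generated by $x_{11'},x_{12'},x_{21'},x_{22'}$ subject to $x_{11'}x_{12'}=x_{12'}x_{11'}$, $x_{21'}x_{22'}=x_{22'}x_{21'}$, $[x_{11'},x_{22'}]+[x_{21'},x_{12'}]=0$, $x_{11'}x_{21'}=q^{-2}x_{21'}x_{11'}$, $x_{12'}x_{22'}=q^{-2}x_{22'}x_{12'}$, $x_{21'}x_{12'}=q^2x_{12'}x_{21'}$, with $q>0$ real. For a linear map $A$ and $x\in\mathfrak{M}^{\rm I}_q$, $A\otimes x$ is the right-linear map $v\otimes f\mapsto Av\otimes xf$. $(B_1,B_2,i,j)$ is stable if no proper subspace $S\subsetneq V$ satisfies $B_k(S)\subset S$ ($k=1,2$) and $i(W)\subset S$. *)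

theory Defs
  imports "HOL-Analysis.Analysis" "HOL-Library.Poly_Mapping"
begin

datatype gen = X11 | X12 | X21 | X22

datatype fword = Word "gen list"

instantiation fword :: monoid_add
begin
definition zero_fword :: fword where "zero_fword = Word []"
fun plus_fword :: "fword \<Rightarrow> fword \<Rightarrow> fword" where
  "plus_fword (Word a) (Word b) = Word (a @ b)"
instance
proof
  fix a b c :: fword
  show "a + b + c = a + (b + c)" by (cases a; cases b; cases c) simp_all
  show "0 + a = a" by (cases a) (simp add: zero_fword_def)
  show "a + 0 = a" by (cases a) (simp add: zero_fword_def)
qed
end

text \<open>The free associative complex algebra: finitely supported complex functions on words,
  with convolution product (a ring_1 via the Poly_Mapping instances).\<close>
type_synonym falg = "fword \<Rightarrow>\<^sub>0 complex"

definition gen_el :: "gen \<Rightarrow> falg" where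
  "gen_el g = Poly_Mapping.single (Word [g]) 1"

definition scal :: "complex \<Rightarrow> falg" where
  "scal c = Poly_Mapping.single 0 c"

text \<open>Defining relations of M^I_q, each written as r - s for the relation r = s.\<close>
definition rels_I :: "real \<Rightarrow> falg set" where
  "rels_I q = (let x11 = gen_el X11; x12 = gen_el X12; x21 = gen_el X21; x22 = gen_el X22 in
     { x11 * x12 - x12 * x11,
       x21 * x22 - x22 * x21,
       (x11 * x22 - x22 * x11) + (x21 * x12 - x12 * x21),
       x11 * x21 - scal (complex_of_real (q powi (-2))) * (x21 * x11),
       x12 * x22 - scal (complex_of_real (q powi (-2))) * (x22 * x12),
       x21 * x12 - scal (complex_of_real (q\<^sup>2)) * (x12 * x21) })"

text \<open>The two-sided ideal generated by the relations; M^I_q is falg modulo this ideal.\<close>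
inductive_set ideal_I :: "real \<Rightarrow> falg set" for q :: real where
  gen: "r \<in> rels_I q \<Longrightarrow> r \<in> ideal_I q"
| zero: "0 \<in> ideal_I q"
| add: "a \<in> ideal_I q \<Longrightarrow> b \<in> ideal_I q \<Longrightarrow> a + b \<in> ideal_I q"
| lmult: "a \<in> ideal_I q \<Longrightarrow> c * a \<in> ideal_I q"
| rmult: "a \<in> ideal_I q \<Longrightarrow> a * c \<in> ideal_I q"

definition adj :: "complex^'n^'m \<Rightarrow> complex^'m^'n" where
  "adj A = (\<chi> k l. cnj (A $ l $ k))"

definition stable ::
  "complex^'n^'n \<Rightarrow> complex^'n^'n \<Rightarrow> complex^'m^'n \<Rightarrow> complex^'n^'m \<Rightarrow> bool" where
  "stable B1 B2 i j \<longleftrightarrow>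
     \<not> (\<exists>S. vec.subspace S \<and> S \<noteq> UNIV \<and> (\<lambda>v. B1 *v v) ` S \<subseteq> S \<and> (\<lambda>v. B2 *v v) ` S \<subseteq> S
            \<and> range (\<lambda>w. i *v w) \<subseteq> S)"

text \<open>An element of V \<otimes> falg (V = C^'n with standard basis e_k) is given by its
  coefficients 'n \<Rightarrow> falg, i.e. \<Sum>_k e_k \<otimes> g k.\<close>
definition tens :: "complex^'a^'b \<Rightarrow> falg \<Rightarrow> ('a \<Rightarrow> falg) \<Rightarrow> ('b \<Rightarrow> falg)" where
  "tens A x g = (\<lambda>k. \<Sum>l\<in>UNIV. scal (A $ k $ l) * (x * g l))"

definition alpha_I ::
  "complex^'n^'n \<Rightarrow> complex^'n^'n \<Rightarrow> complex^'n^'m \<Rightarrow> ('n \<Rightarrow> falg)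
     \<Rightarrow> ('n \<Rightarrow> falg) \<times> ('n \<Rightarrow> falg) \<times> ('m \<Rightarrow> falg)" where
  "alpha_I B1 B2 j g =
     ((\<lambda>k. tens B1 1 g k - gen_el X21 * g k),
      (\<lambda>k. tens B2 1 g k - gen_el X22 * g k),
      tens j 1 g)"

definition beta_I ::
  "complex^'n^'n \<Rightarrow> complex^'n^'n \<Rightarrow> complex^'m^'n
     \<Rightarrow> ('n \<Rightarrow> falg) \<times> ('n \<Rightarrow> falg) \<times> ('m \<Rightarrow> falg) \<Rightarrow> ('n \<Rightarrow> falg)" where
  "beta_I B1 B2 i f = (case f of (a, b, c) \<Rightarrow>
     (\<lambda>k. - tens B2 1 a k + gen_el X22 * a k + tens B1 1 b k - gen_el X21 * b k + tens i 1 c k))"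

text \<open>Injectivity / surjectivity of the induced maps on V \<otimes> M^I_q = (falg / ideal_I q)^n,
  expressed through the congruence modulo ideal_I q (coordinatewise).\<close>
definition zero_mod :: "real \<Rightarrow> ('a \<Rightarrow> falg) \<Rightarrow> bool" where
  "zero_mod q g \<longleftrightarrow> (\<forall>k. g k \<in> ideal_I q)"

definition alpha_I_injective ::
  "real \<Rightarrow> complex^'n^'n \<Rightarrow> complex^'n^'n \<Rightarrow> complex^'n^'m \<Rightarrow> bool" where
  "alpha_I_injective q B1 B2 j \<longleftrightarrow>
     (\<forall>g g'. (case (alpha_I B1 B2 j g, alpha_I B1 B2 j g') of ((a,b,c),(a',b',c')) \<Rightarrow>
                zero_mod q (\<lambda>k. a k - a' k) \<and> zero_mod q (\<lambda>k. b k - b' k) \<and> zero_mod q (\<lambda>k. c k - c' k))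
            \<longrightarrow> zero_mod q (\<lambda>k. g k - g' k))"

definition beta_I_surjective ::
  "real \<Rightarrow> complex^'n^'n \<Rightarrow> complex^'n^'n \<Rightarrow> complex^'m^'n \<Rightarrow> bool" where
  "beta_I_surjective q B1 B2 i \<longleftrightarrow>
     (\<forall>h :: 'n \<Rightarrow> falg. \<exists>f. zero_mod q (\<lambda>k. beta_I B1 B2 i f k - h k))"

end

theory Submission
  imports Defs "HOL-Library.Function_Algebras"
begin


section \<open>Generic linear extension of word actions\<close>

definition lin :: "(('x \<Rightarrow> complex) \<Rightarrow> ('x \<Rightarrow> complex)) \<Rightarrow> bool" where
  "lin T \<longleftrightarrow> (\<forall>u v. T (u + v) = T u + T v) \<and> (\<forall>c u. T (\<lambda>m. c * u m) = (\<lambda>m. c * T u m))"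

lemma lin_add: "lin T \<Longrightarrow> T (u + v) = T u + T v" by (simp add: lin_def)
lemma lin_smult: "lin T \<Longrightarrow> T (\<lambda>m. c * u m) = (\<lambda>m. c * T u m)" by (simp add: lin_def)
lemma lin_add': assumes "lin T" shows "T (\<lambda>m. u m + v m) = (\<lambda>m. T u m + T v m)"
  using lin_add[OF assms, of u v] by (simp only: plus_fun_def)
lemma lin_zero: assumes "lin T" shows "T 0 = 0"
proof -
  have "T (\<lambda>m. 0 * (0::'a\<Rightarrow>complex) m) = (\<lambda>m. 0 * T 0 m)" by (rule lin_smult[OF assms])
  then show ?thesis by (simp add: zero_fun_def)
qed
lemma lin_uminus: assumes "lin T" shows "T (- u) = - T u"
proof -
  have "T (\<lambda>m. (-1) * u m) = (\<lambda>m. (-1) * T u m)" by (rule lin_smult[OF assms])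
  moreover have "(\<lambda>m. (-1) * u m) = - u" "(\<lambda>m. (-1) * T u m) = - T u" by (auto simp: fun_eq_iff)
  ultimately show ?thesis by simp
qed
lemma lin_diff: assumes "lin T" shows "T (u - v) = T u - T v"
  using lin_add[OF assms, of u "- v"] lin_uminus[OF assms, of v] by simp
lemma lin_sum: assumes "lin T" shows "T (\<Sum>s\<in>F. U s) = (\<Sum>s\<in>F. T (U s))"
proof (induction F rule: infinite_finite_induct)
  case (infinite A) then show ?case by (metis sum.infinite lin_zero[OF assms])
next
  case empty then show ?case by (simp only: sum.empty lin_zero[OF assms])
next
  case (insert x F) show ?case by (simp only: sum.insert[OF insert(1,2)] lin_add[OF assms] insert(3))
qed
lemma lin_comp: "lin S \<Longrightarrow> lin T \<Longrightarrow> lin (S \<circ> T)" by (simp add: lin_def)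
lemma lin_id: "lin id" by (simp add: lin_def)

fun unW :: "fword \<Rightarrow> gen list" where "unW (Word l) = l"

lemma unW_plus: "unW (a + b) = unW a @ unW b" by (cases a; cases b) simp
lemma unW_zero: "unW 0 = []" by (simp add: zero_fword_def)

fun wop :: "(gen \<Rightarrow> ('x \<Rightarrow> complex) \<Rightarrow> ('x \<Rightarrow> complex)) \<Rightarrow> gen list \<Rightarrow> ('x \<Rightarrow> complex) \<Rightarrow> ('x \<Rightarrow> complex)" where
  "wop G [] = id"
| "wop G (x # xs) = G x \<circ> wop G xs"

lemma wop_append: "wop G (a @ b) = wop G a \<circ> wop G b" by (induction a) auto

lemma wop_lin: "(\<And>x. lin (G x)) \<Longrightarrow> lin (wop G w)"
  by (induction w) (auto intro: lin_comp lin_id)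

definition rep :: "(gen \<Rightarrow> ('x \<Rightarrow> complex) \<Rightarrow> ('x \<Rightarrow> complex)) \<Rightarrow> falg \<Rightarrow> ('x \<Rightarrow> complex) \<Rightarrow> ('x \<Rightarrow> complex)" where
  "rep G f u = (\<lambda>m. \<Sum>w\<in>Poly_Mapping.keys f. Poly_Mapping.lookup f w * wop G (unW w) u m)"

lemma rep_superset:
  assumes "finite S" "Poly_Mapping.keys f \<subseteq> S"
  shows "rep G f u = (\<lambda>m. \<Sum>w\<in>S. Poly_Mapping.lookup f w * wop G (unW w) u m)"
  unfolding rep_def
proof
  fix m show "(\<Sum>w\<in>Poly_Mapping.keys f. Poly_Mapping.lookup f w * wop G (unW w) u m) = (\<Sum>w\<in>S. Poly_Mapping.lookup f w * wop G (unW w) u m)"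
    by (rule sum.mono_neutral_left) (use assms in \<open>auto simp: in_keys_iff\<close>)
qed

lemma rep_add: "rep G (f + g) u = rep G f u + rep G g u"
proof -
  let ?S = "Poly_Mapping.keys f \<union> Poly_Mapping.keys g"
  have 1: "rep G (f + g) u = (\<lambda>m. \<Sum>w\<in>?S. Poly_Mapping.lookup (f+g) w * wop G (unW w) u m)"
    by (rule rep_superset) (auto dest: set_mp[OF keys_add])
  have 2: "rep G f u = (\<lambda>m. \<Sum>w\<in>?S. Poly_Mapping.lookup f w * wop G (unW w) u m)"
    by (rule rep_superset) auto
  have 3: "rep G g u = (\<lambda>m. \<Sum>w\<in>?S. Poly_Mapping.lookup g w * wop G (unW w) u m)"
    by (rule rep_superset) auto
  show ?thesis unfolding 1 2 3 by (auto simp: lookup_add distrib_right sum.distrib)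
qed

lemma rep_zero: "rep G 0 u = 0" by (simp add: rep_def zero_fun_def)

lemma rep_uminus: "rep G (- f) u = - rep G f u"
  using rep_add[of G f "- f" u] by (simp add: rep_zero eq_neg_iff_add_eq_0 add.commute)

lemma rep_diff: "rep G (f - g) u = rep G f u - rep G g u"
  using rep_add[of G f "- g" u] by (simp add: rep_uminus)

lemma rep_single: "rep G (Poly_Mapping.single w c) u = (\<lambda>m. c * wop G (unW w) u m)"
  by (auto simp: rep_def)

lemma rep_lin: assumes "\<And>x. lin (G x)" shows "lin (rep G f)"
proof -
  have L: "lin (wop G w)" for w using wop_lin assms by blast
  show ?thesis
    unfolding lin_def rep_def
    by (auto simp: lin_add[OF L] lin_smult[OF L] distrib_left sum.distrib sum_distrib_left mult.left_commute)
qed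

lemma update_as_add: "a \<notin> Poly_Mapping.keys f \<Longrightarrow> Poly_Mapping.update a b f = f + Poly_Mapping.single a b"
  by (rule poly_mapping_eqI) (auto simp: lookup_update lookup_add lookup_single in_keys_iff when_def)

lemma pm_induct:
  assumes "P 0" "\<And>f w c. P f \<Longrightarrow> P (f + Poly_Mapping.single w c)"
  shows "P f"
  by (induction f rule: update_induct) (auto simp: update_as_add assms)

lemma rep_mult_single:
  assumes "\<And>x. lin (G x)"
  shows "rep G (Poly_Mapping.single w c * g) u = (\<lambda>m. c * wop G (unW w) (rep G g u) m)"
proof (induction g rule: pm_induct)
  case 1
  have L: "lin (wop G (unW w))" using wop_lin assms by blast
  show ?case unfolding mult_zero_right rep_zero lin_zero[OF L] by (simp add: fun_eq_iff)
next
  case (2 f v d)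
  have L: "lin (wop G (unW w))" using wop_lin assms by blast
  have "Poly_Mapping.single w c * (f + Poly_Mapping.single v d) = Poly_Mapping.single w c * f + Poly_Mapping.single (w + v) (c * d)"
    by (simp add: distrib_left mult_single)
  then show ?case using 2
    by (simp add: rep_add rep_single lin_add'[OF L] lin_smult[OF L] unW_plus wop_append distrib_left mult.assoc)
qed

lemma rep_mult:
  assumes "\<And>x. lin (G x)"
  shows "rep G (f * g) u = rep G f (rep G g u)"
proof (induction f rule: pm_induct)
  case 1 then show ?case by (simp add: rep_zero)
next
  case (2 f w c)
  then show ?case by (simp add: distrib_right rep_add rep_mult_single[OF assms] rep_single)
qed

lemma rep_gen: "rep G (gen_el x) u = G x u"
  by (simp add: gen_el_def rep_single)

lemma rep_scal: "rep G (scal c) u = (\<lambda>m. c * u m)"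
  by (simp add: scal_def rep_single unW_zero)

lemma rep_one: "rep G 1 u = u"
  using rep_scal[of G 1 u] by (simp add: scal_def)


lemma I_add: "a \<in> ideal_I q \<Longrightarrow> b \<in> ideal_I q \<Longrightarrow> a + b \<in> ideal_I q" by (rule ideal_I.add)
lemma I_lmult: "a \<in> ideal_I q \<Longrightarrow> c * a \<in> ideal_I q" by (rule ideal_I.lmult)
lemma I_rmult: "a \<in> ideal_I q \<Longrightarrow> a * c \<in> ideal_I q" by (rule ideal_I.rmult)
lemma I_zero: "0 \<in> ideal_I q" by (rule ideal_I.zero)
lemma I_uminus: "a \<in> ideal_I q \<Longrightarrow> - a \<in> ideal_I q"
  using I_lmult[of a q "-1"] by simp
lemma I_diff: "a \<in> ideal_I q \<Longrightarrow> b \<in> ideal_I q \<Longrightarrow> a - b \<in> ideal_I q"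
  using I_add[of a q "- b"] I_uminus[of b q] by simp
lemma I_sum: "(\<And>s. s \<in> F \<Longrightarrow> U s \<in> ideal_I q) \<Longrightarrow> sum U F \<in> ideal_I q"
  by (induction F rule: infinite_finite_induct) (auto intro: I_zero I_add)

lemma scal_mult: "scal (a * b) = scal a * scal b" by (simp add: scal_def mult_single)
lemma scal_add: "scal (a + b) = scal a + scal b" by (simp add: scal_def single_add)
lemma scal_one: "scal 1 = 1" by (simp add: scal_def)
lemma scal_zero: "scal 0 = 0" by (simp add: scal_def)
lemma scal_diff: "scal (a - b) = scal a - scal b" by (simp add: scal_def single_diff)
lemma scal_sum: "scal (sum f F) = (\<Sum>x\<in>F. scal (f x))"
  by (induction F rule: infinite_finite_induct) (auto simp: scal_zero scal_add)
lemma scal_power: "scal (c ^ n) = scal c ^ n"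
  by (induction n) (auto simp: scal_one scal_mult)

lemma scal_comm: "scal c * f = f * scal c"
proof (induction f rule: pm_induct)
  case 1 then show ?case by simp
next
  case (2 f w d)
  have "scal c * Poly_Mapping.single w d = Poly_Mapping.single w d * scal c"
    by (simp add: scal_def mult_single mult.commute)
  then show ?case using 2 by (simp add: distrib_left distrib_right)
qed

lemma scal_left_commute: "a * (scal k * b) = scal k * (a * b)"
  by (metis mult.assoc scal_comm)
lemma scal_scal: "scal k * (scal m * b) = scal (k * m) * b"
  by (simp add: scal_mult mult.assoc)

definition cg :: "real \<Rightarrow> falg \<Rightarrow> falg \<Rightarrow> bool" where
  "cg q a b \<longleftrightarrow> a - b \<in> ideal_I q"

lemma cg_refl: "cg q a a" by (simp add: cg_def I_zero)
lemma cg_sym: "cg q a b \<Longrightarrow> cg q b a"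
  unfolding cg_def using I_uminus by fastforce
lemma cg_trans: "cg q a b \<Longrightarrow> cg q b c \<Longrightarrow> cg q a c"
  unfolding cg_def using I_add by fastforce
lemma cg_add: "cg q a b \<Longrightarrow> cg q c d \<Longrightarrow> cg q (a + c) (b + d)"
  unfolding cg_def using I_add by (fastforce simp: algebra_simps)
lemma cg_diff: "cg q a b \<Longrightarrow> cg q c d \<Longrightarrow> cg q (a - c) (b - d)"
  unfolding cg_def using I_diff by (fastforce simp: algebra_simps)
lemma cg_lmult: "cg q a b \<Longrightarrow> cg q (c * a) (c * b)"
  unfolding cg_def using I_lmult by (fastforce simp: algebra_simps)
lemma cg_rmult: "cg q a b \<Longrightarrow> cg q (a * c) (b * c)"
  unfolding cg_def using I_rmult by (fastforce simp: algebra_simps)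
lemma cg_mult: "cg q a b \<Longrightarrow> cg q c d \<Longrightarrow> cg q (a * c) (b * d)"
  by (meson cg_lmult cg_rmult cg_trans)

lemma cg_comm_pow1:
  assumes "cg q (x * y) (scal k * (y * x))"
  shows "cg q (x * y ^ n) (scal (k ^ n) * (y ^ n * x))"
proof (induction n)
  case 0 then show ?case by (simp add: scal_one cg_refl)
next
  case (Suc n)
  have "cg q (x * y ^ Suc n) ((scal k * (y * x)) * y ^ n)"
    using cg_rmult[OF assms, of "y ^ n"] by (simp add: mult.assoc)
  also have "(scal k * (y * x)) * y ^ n = scal k * y * (x * y ^ n)" by (simp add: mult.assoc)
  finally have 1: "cg q (x * y ^ Suc n) (scal k * y * (x * y ^ n))" .
  have "cg q (scal k * y * (x * y ^ n)) (scal k * y * (scal (k ^ n) * (y ^ n * x)))"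
    by (rule cg_lmult[OF Suc])
  also have "scal k * y * (scal (k ^ n) * (y ^ n * x)) = scal (k ^ Suc n) * (y ^ Suc n * x)"
    by (simp add: scal_left_commute[of y] scal_scal mult.assoc)
  finally show ?case using 1 cg_trans by blast
qed

lemma cg_comm_pow2:
  assumes "cg q (x * y) (scal k * (y * x))"
  shows "cg q (x ^ n * y) (scal (k ^ n) * (y * x ^ n))"
proof (induction n)
  case 0 then show ?case by (simp add: scal_one cg_refl)
next
  case (Suc n)
  have e1: "x ^ Suc n * y = x * (x ^ n * y)" by (simp add: mult.assoc)
  have c1: "cg q (x * (x ^ n * y)) (x * (scal (k ^ n) * (y * x ^ n)))"
    by (rule cg_lmult[OF Suc])
  have e2: "x * (scal (k ^ n) * (y * x ^ n)) = scal (k ^ n) * (x * y) * x ^ n"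
    by (simp add: scal_left_commute[of x] mult.assoc)
  have c2: "cg q (scal (k ^ n) * (x * y) * x ^ n) (scal (k ^ n) * (scal k * (y * x)) * x ^ n)"
    by (rule cg_rmult[OF cg_lmult[OF assms]])
  have e3: "scal (k ^ n) * (scal k * (y * x)) * x ^ n = scal (k ^ Suc n) * (y * x ^ Suc n)"
  proof -
    have "k ^ n * k = k ^ Suc n" by (simp add: mult.commute)
    then show ?thesis by (simp only: scal_scal mult.assoc power_Suc)
  qed
  have "cg q (x ^ Suc n * y) (scal (k ^ n) * (x * y) * x ^ n)" using c1 unfolding e1 e2 .
  then have "cg q (x ^ Suc n * y) (scal (k ^ n) * (scal k * (y * x)) * x ^ n)" using c2 by (rule cg_trans)
  then show ?case unfolding e3 .
qed


abbreviation "ga \<equiv> gen_el X21"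
abbreviation "gb \<equiv> gen_el X12"
abbreviation "gc \<equiv> gen_el X11"
abbreviation "gd \<equiv> gen_el X22"

definition pp :: "real \<Rightarrow> complex" where "pp q = complex_of_real (q powi (-2))"
definition QQ :: "real \<Rightarrow> complex" where "QQ q = complex_of_real (q\<^sup>2)"

lemma pQ: "q \<noteq> 0 \<Longrightarrow> pp q * QQ q = 1"
  by (simp add: pp_def QQ_def power_int_minus flip: of_real_mult)

lemma rel1: "gc * gb - gb * gc \<in> ideal_I q"
  by (rule ideal_I.gen) (simp add: rels_I_def Let_def)
lemma rel2: "ga * gd - gd * ga \<in> ideal_I q"
  by (rule ideal_I.gen) (simp add: rels_I_def Let_def)
lemma rel3: "(gc * gd - gd * gc) + (ga * gb - gb * ga) \<in> ideal_I q"
  by (rule ideal_I.gen) (simp add: rels_I_def Let_def)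
lemma rel4: "gc * ga - scal (pp q) * (ga * gc) \<in> ideal_I q"
  by (rule ideal_I.gen) (simp add: rels_I_def Let_def pp_def)
lemma rel5: "gb * gd - scal (pp q) * (gd * gb) \<in> ideal_I q"
  by (rule ideal_I.gen) (simp add: rels_I_def Let_def pp_def)
lemma rel6: "ga * gb - scal (QQ q) * (gb * ga) \<in> ideal_I q"
  by (rule ideal_I.gen) (simp add: rels_I_def Let_def QQ_def)

lemma cg_cb: "cg q (gc * gb) (scal 1 * (gb * gc))"
  using rel1 by (simp add: cg_def scal_one)
lemma cg_da: "cg q (gd * ga) (scal 1 * (ga * gd))"
proof -
  have "gd * ga - scal 1 * (ga * gd) = - (ga * gd - gd * ga)" by (simp add: scal_one)
  then show ?thesis unfolding cg_def using I_uminus[OF rel2] by simp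
qed
lemma cg_ca: "cg q (gc * ga) (scal (pp q) * (ga * gc))"
  using rel4 by (simp add: cg_def)
lemma cg_ba: assumes "q \<noteq> 0" shows "cg q (gb * ga) (scal (pp q) * (ga * gb))"
proof -
  have "gb * ga - scal (pp q) * (ga * gb) = - (scal (pp q) * (ga * gb - scal (QQ q) * (gb * ga)))"
  proof -
    have "scal (pp q) * (scal (QQ q) * (gb * ga)) = gb * ga"
      by (simp only: scal_scal pQ[OF assms] scal_one mult_1_left)
    then show ?thesis by (simp add: right_diff_distrib)
  qed
  then show ?thesis unfolding cg_def using I_uminus[OF I_lmult[OF rel6]] by simp
qed
lemma cg_db: assumes "q \<noteq> 0" shows "cg q (gd * gb) (scal (QQ q) * (gb * gd))"
proof -
  have "gd * gb - scal (QQ q) * (gb * gd) = - (scal (QQ q) * (gb * gd - scal (pp q) * (gd * gb)))"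
  proof -
    have "scal (QQ q) * (scal (pp q) * (gd * gb)) = gd * gb"
      by (simp only: scal_scal pQ[OF assms] mult.commute[of "QQ q"] scal_one mult_1_left)
    then show ?thesis by (simp add: right_diff_distrib)
  qed
  then show ?thesis unfolding cg_def using I_uminus[OF I_lmult[OF rel5]] by simp
qed
lemma cg_dc: assumes "q \<noteq> 0" shows "cg q (gd * gc) (gc * gd + scal (1 - pp q) * (ga * gb))"
proof -
  have "gd * gc - (gc * gd + scal (1 - pp q) * (ga * gb)) =
        - ((gc * gd - gd * gc) + (ga * gb - gb * ga)) - (gb * ga - scal (pp q) * (ga * gb))"
  proof -
    have "scal (1 - pp q) * (ga * gb) = ga * gb - scal (pp q) * (ga * gb)"
      by (simp only: scal_diff scal_one left_diff_distrib mult_1_left)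
    then show ?thesis by (simp add: algebra_simps)
  qed
  then show ?thesis unfolding cg_def by (simp only: I_diff[OF I_uminus[OF rel3] cg_ba[OF assms, unfolded cg_def]])
qed

section \<open>PBW monomials\<close>

fun pbw :: "nat \<times> nat \<times> nat \<times> nat \<Rightarrow> fword" where
  "pbw (a, b, c, d) = Word (replicate a X21 @ replicate b X12 @ replicate c X11 @ replicate d X22)"

definition pmono :: "nat \<times> nat \<times> nat \<times> nat \<Rightarrow> falg" where
  "pmono m = Poly_Mapping.single (pbw m) 1"

lemma gen_pow: "gen_el x ^ n = Poly_Mapping.single (Word (replicate n x)) 1"
proof (induction n)
  case 0 then show ?case by (simp add: zero_fword_def[symmetric])
next
  case (Suc n) then show ?case by (simp add: gen_el_def mult_single)
qed

lemma pmono_eq: "pmono (a, b, c, d) = ga ^ a * gb ^ b * gc ^ c * gd ^ d"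
  by (simp add: pmono_def gen_pow mult_single)

lemma pbw_inj: "pbw m = pbw m' \<Longrightarrow> m = m'"
proof -
  obtain a b c d where m: "m = (a, b, c, d)" by (cases m) auto
  obtain a' b' c' d' where m': "m' = (a', b', c', d')" by (cases m') auto
  assume "pbw m = pbw m'"
  then have e: "replicate a X21 @ replicate b X12 @ replicate c X11 @ replicate d X22 =
                replicate a' X21 @ replicate b' X12 @ replicate c' X11 @ replicate d' X22"
    by (simp add: m m')
  have "a = a'" using arg_cong[OF e, of "\<lambda>l. length (filter ((=) X21) l)"] by (simp add: filter_replicate)
  moreover have "b = b'" using arg_cong[OF e, of "\<lambda>l. length (filter ((=) X12) l)"] by (simp add: filter_replicate)
  moreover have "c = c'" using arg_cong[OF e, of "\<lambda>l. length (filter ((=) X11) l)"] by (simp add: filter_replicate)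
  moreover have "d = d'" using arg_cong[OF e, of "\<lambda>l. length (filter ((=) X22) l)"] by (simp add: filter_replicate)
  ultimately show "m = m'" by (simp add: m m')
qed


definition PB :: "falg \<Rightarrow> bool" where "PB g \<longleftrightarrow> Poly_Mapping.keys g \<subseteq> range pbw"

definition SP :: "real \<Rightarrow> falg set" where "SP q = {f. \<exists>g. PB g \<and> cg q f g}"

lemma single_pbw: "Poly_Mapping.single (pbw m) c = scal c * pmono m"
  by (simp add: scal_def pmono_def mult_single)

lemma lookup_scal: "Poly_Mapping.lookup (scal c * g) w = c * Poly_Mapping.lookup g w"
  unfolding scal_def mult_map_scale_conv_mult[symmetric] by transfer (simp add: when_def)

lemma keys_scal: "Poly_Mapping.keys (scal c * g) \<subseteq> Poly_Mapping.keys g"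
  by (auto simp: in_keys_iff lookup_scal)

lemma keys_add_single:
  "w \<notin> Poly_Mapping.keys f \<Longrightarrow> c \<noteq> 0 \<Longrightarrow> Poly_Mapping.keys (f + Poly_Mapping.single w c) = insert w (Poly_Mapping.keys f)"
  by (auto simp: in_keys_iff lookup_add lookup_single when_def split: if_splits)

lemma pm_induct2:
  assumes "P 0" "\<And>f w c. w \<notin> Poly_Mapping.keys f \<Longrightarrow> c \<noteq> 0 \<Longrightarrow> P f \<Longrightarrow> P (f + Poly_Mapping.single w c)"
  shows "P f"
  by (induction f rule: update_induct) (auto simp: update_as_add assms)

lemma PB_induct:
  assumes "PB g" "P 0" "\<And>f m c. PB f \<Longrightarrow> P f \<Longrightarrow> P (f + scal c * pmono m)"
  shows "P g"
proof -
  have "PB g \<longrightarrow> P g"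
  proof (induction g rule: pm_induct2)
    case 1 then show ?case using assms(2) by simp
  next
    case (2 f w c)
    show ?case
    proof
      assume "PB (f + Poly_Mapping.single w c)"
      then have "PB f" "w \<in> range pbw" using keys_add_single[OF 2(1,2)] by (auto simp: PB_def)
      then obtain m where "w = pbw m" by auto
      then show "P (f + Poly_Mapping.single w c)" using assms(3)[of f c m] 2(3) \<open>PB f\<close> by (simp add: single_pbw)
    qed
  qed
  then show ?thesis using assms(1) by simp
qed

lemma PB_zero: "PB 0" by (simp add: PB_def)
lemma PB_add: "PB f \<Longrightarrow> PB g \<Longrightarrow> PB (f + g)" using keys_add[of f g] by (auto simp: PB_def)
lemma PB_scal: "PB f \<Longrightarrow> PB (scal c * f)" using keys_scal[of c f] by (auto simp: PB_def)
lemma PB_mono: "PB (pmono m)" by (simp add: PB_def pmono_def)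

lemma SP_PB: "PB g \<Longrightarrow> g \<in> SP q" by (auto simp: SP_def intro: cg_refl)
lemma SP_cg: "cg q f f' \<Longrightarrow> f' \<in> SP q \<Longrightarrow> f \<in> SP q" by (auto simp: SP_def intro: cg_trans)
lemma SP_add: "f \<in> SP q \<Longrightarrow> g \<in> SP q \<Longrightarrow> f + g \<in> SP q" by (auto simp: SP_def intro!: PB_add cg_add)
lemma SP_scal: "f \<in> SP q \<Longrightarrow> scal c * f \<in> SP q" by (auto simp: SP_def intro!: PB_scal cg_lmult)
lemma SP_zero: "0 \<in> SP q" by (rule SP_PB[OF PB_zero])
lemma SP_mono: "pmono m \<in> SP q" by (rule SP_PB[OF PB_mono])

lemma SP_lmult:
  assumes h: "\<And>m. h * pmono m \<in> SP q" and f: "f \<in> SP q"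
  shows "h * f \<in> SP q"
proof -
  obtain g where g: "PB g" "cg q f g" using f by (auto simp: SP_def)
  have "h * g \<in> SP q"
    using g(1)
  proof (rule PB_induct)
    show "h * 0 \<in> SP q" by (simp add: SP_zero)
  next
    fix f' m c assume "h * f' \<in> SP q"
    moreover have "h * (f' + scal c * pmono m) = h * f' + scal c * (h * pmono m)"
      by (simp add: distrib_left scal_left_commute)
    ultimately show "h * (f' + scal c * pmono m) \<in> SP q" by (simp add: SP_add SP_scal h)
  qed
  then show ?thesis using cg_lmult[OF g(2), of h] SP_cg by blast
qed

lemma SP_lmult_pow:
  assumes h: "\<And>m. h * pmono m \<in> SP q" and f: "f \<in> SP q"
  shows "h ^ n * f \<in> SP q"
proof (induction n)
  case 0 then show ?case using f by simp
next
  case (Suc n)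
  have "h * (h ^ n * f) \<in> SP q" by (rule SP_lmult[OF h Suc])
  then show ?case by (simp add: mult.assoc)
qed

lemma LA: "ga * pmono (a, b, c, d) = pmono (Suc a, b, c, d)"
  by (simp add: pmono_eq mult.assoc)

lemma LB: assumes "q \<noteq> 0" shows "cg q (gb * pmono (a, b, c, d)) (scal (pp q ^ a) * pmono (a, Suc b, c, d))"
proof -
  have 1: "cg q (gb * ga ^ a) (scal (pp q ^ a) * (ga ^ a * gb))" by (rule cg_comm_pow1[OF cg_ba[OF assms]])
  have e1: "gb * pmono (a, b, c, d) = (gb * ga ^ a) * (gb ^ b * gc ^ c * gd ^ d)"
    by (simp only: pmono_eq mult.assoc)
  have e2: "(scal (pp q ^ a) * (ga ^ a * gb)) * (gb ^ b * gc ^ c * gd ^ d) = scal (pp q ^ a) * pmono (a, Suc b, c, d)"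
    by (simp only: pmono_eq mult.assoc power_Suc)
  show ?thesis using cg_rmult[OF 1, of "gb ^ b * gc ^ c * gd ^ d"] unfolding e1 e2 .
qed

lemma LC: "cg q (gc * pmono (a, b, c, d)) (scal (pp q ^ a) * pmono (a, b, Suc c, d))"
proof -
  have 1: "cg q (gc * ga ^ a) (scal (pp q ^ a) * (ga ^ a * gc))" by (rule cg_comm_pow1[OF cg_ca])
  have 2: "cg q (gc * gb ^ b) (scal (1 ^ b) * (gb ^ b * gc))" by (rule cg_comm_pow1[OF cg_cb])
  have e1: "gc * pmono (a, b, c, d) = (gc * ga ^ a) * (gb ^ b * gc ^ c * gd ^ d)"
    by (simp only: pmono_eq mult.assoc)
  have c1: "cg q (gc * pmono (a, b, c, d)) (scal (pp q ^ a) * (ga ^ a * gc) * (gb ^ b * gc ^ c * gd ^ d))"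
    unfolding e1 by (rule cg_rmult[OF 1])
  have e2: "scal (pp q ^ a) * (ga ^ a * gc) * (gb ^ b * gc ^ c * gd ^ d) = (scal (pp q ^ a) * ga ^ a) * (gc * gb ^ b) * (gc ^ c * gd ^ d)"
    by (simp only: mult.assoc)
  have c2: "cg q ((scal (pp q ^ a) * ga ^ a) * (gc * gb ^ b) * (gc ^ c * gd ^ d)) ((scal (pp q ^ a) * ga ^ a) * (scal (1 ^ b) * (gb ^ b * gc)) * (gc ^ c * gd ^ d))"
    by (rule cg_rmult[OF cg_lmult[OF 2]])
  have e3: "(scal (pp q ^ a) * ga ^ a) * (scal (1 ^ b) * (gb ^ b * gc)) * (gc ^ c * gd ^ d) = scal (pp q ^ a) * pmono (a, b, Suc c, d)"
    by (simp only: pmono_eq mult.assoc power_Suc power_one scal_one mult_1_left)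
  show ?thesis using c1 c2 cg_trans unfolding e2 e3 by blast
qed

lemma SP_A: "ga * pmono m \<in> SP q"
  by (cases m) (auto simp: LA SP_mono)
lemma SP_B: "q \<noteq> 0 \<Longrightarrow> gb * pmono m \<in> SP q"
  by (cases m) (metis LB SP_cg SP_mono SP_scal)
lemma SP_C: "gc * pmono m \<in> SP q"
  by (cases m) (metis LC SP_cg SP_mono SP_scal)

lemma SP_D0: assumes "q \<noteq> 0" shows "gd * (gc ^ c * gd ^ d) \<in> SP q"
proof (induction c)
  case 0
  have "gd * (gc ^ 0 * gd ^ d) = pmono (0, 0, 0, Suc d)" by (simp add: pmono_eq)
  then show ?case by (simp add: SP_mono)
next
  case (Suc c)
  have e1: "gd * (gc ^ Suc c * gd ^ d) = (gd * gc) * (gc ^ c * gd ^ d)" by (simp only: power_Suc mult.assoc)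
  have c1: "cg q ((gd * gc) * (gc ^ c * gd ^ d)) ((gc * gd + scal (1 - pp q) * (ga * gb)) * (gc ^ c * gd ^ d))"
    by (rule cg_rmult[OF cg_dc[OF assms]])
  have e2: "(gc * gd + scal (1 - pp q) * (ga * gb)) * (gc ^ c * gd ^ d) = gc * (gd * (gc ^ c * gd ^ d)) + scal (1 - pp q) * pmono (1, 1, c, d)"
    by (simp add: distrib_right pmono_eq mult.assoc)
  have "gc * (gd * (gc ^ c * gd ^ d)) + scal (1 - pp q) * pmono (1, 1, c, d) \<in> SP q"
    by (intro SP_add SP_scal SP_mono SP_lmult[OF SP_C Suc])
  then show ?case using c1 unfolding e1 e2 using SP_cg by blast
qed

lemma SP_D: assumes "q \<noteq> 0" shows "gd * pmono m \<in> SP q"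
proof -
  obtain a b c d where m: "m = (a, b, c, d)" by (cases m) auto
  have 1: "cg q (gd * ga ^ a) (scal (1 ^ a) * (ga ^ a * gd))" by (rule cg_comm_pow1[OF cg_da])
  have 2: "cg q (gd * gb ^ b) (scal (QQ q ^ b) * (gb ^ b * gd))" by (rule cg_comm_pow1[OF cg_db[OF assms]])
  have e1: "gd * pmono m = (gd * ga ^ a) * (gb ^ b * (gc ^ c * gd ^ d))"
    by (simp only: m pmono_eq mult.assoc)
  have c1: "cg q (gd * pmono m) (scal (1 ^ a) * (ga ^ a * gd) * (gb ^ b * (gc ^ c * gd ^ d)))"
    unfolding e1 by (rule cg_rmult[OF 1])
  have e2: "scal (1 ^ a) * (ga ^ a * gd) * (gb ^ b * (gc ^ c * gd ^ d)) = ga ^ a * ((gd * gb ^ b) * (gc ^ c * gd ^ d))"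
    by (simp only: mult.assoc power_one scal_one mult_1_left)
  have c2: "cg q (ga ^ a * ((gd * gb ^ b) * (gc ^ c * gd ^ d))) (ga ^ a * ((scal (QQ q ^ b) * (gb ^ b * gd)) * (gc ^ c * gd ^ d)))"
    by (rule cg_lmult[OF cg_rmult[OF 2]])
  have e3: "ga ^ a * ((scal (QQ q ^ b) * (gb ^ b * gd)) * (gc ^ c * gd ^ d)) = scal (QQ q ^ b) * (ga ^ a * (gb ^ b * (gd * (gc ^ c * gd ^ d))))"
    by (simp only: mult.assoc scal_left_commute[of "ga ^ a"])
  have "scal (QQ q ^ b) * (ga ^ a * (gb ^ b * (gd * (gc ^ c * gd ^ d)))) \<in> SP q"
    by (intro SP_scal SP_lmult_pow[OF SP_A] SP_lmult_pow[OF SP_B[OF assms]] SP_D0[OF assms])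
  then show ?thesis using c1 c2 unfolding e2 e3 using SP_cg cg_trans by blast
qed

lemma SP_word: assumes "q \<noteq> 0" shows "Poly_Mapping.single (Word l) 1 \<in> SP q"
proof (induction l)
  case Nil
  have "Poly_Mapping.single (Word []) 1 = pmono (0, 0, 0, 0)" by (simp add: pmono_def)
  then show ?case by (simp add: SP_mono)
next
  case (Cons x l)
  have e: "Poly_Mapping.single (Word (x # l)) 1 = gen_el x * Poly_Mapping.single (Word l) 1"
    by (simp add: gen_el_def mult_single)
  show ?case unfolding e
    by (cases x) (auto intro: SP_lmult[OF _ Cons] SP_A SP_B[OF assms] SP_C SP_D[OF assms])
qed

lemma SP_all: assumes "q \<noteq> 0" shows "f \<in> SP q"
proof (induction f rule: pm_induct)
  case 1 then show ?case by (rule SP_zero)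
next
  case (2 f w c)
  obtain l where w: "w = Word l" by (cases w) auto
  have "Poly_Mapping.single w c = scal c * Poly_Mapping.single (Word l) 1"
    by (simp add: w scal_def mult_single)
  then show ?case using 2 by (simp add: SP_add SP_scal SP_word[OF assms])
qed


type_synonym pt = "nat \<times> nat \<times> nat \<times> nat"

definition G4 :: "complex \<Rightarrow> gen \<Rightarrow> (pt \<Rightarrow> complex) \<Rightarrow> (pt \<Rightarrow> complex)" where
  "G4 Q x u = (\<lambda>(a, b, c, d). case x of
      X21 \<Rightarrow> (if a = 0 then 0 else u (a - 1, b, c, d))
    | X12 \<Rightarrow> (if b = 0 then 0 else inverse Q ^ a * u (a, b - 1, c, d))
    | X11 \<Rightarrow> (if c = 0 then 0 else inverse Q ^ a * u (a, b, c - 1, d))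
    | X22 \<Rightarrow> (if d = 0 then 0 else Q ^ b * u (a, b, c, d - 1))
             + (if a = 0 \<or> b = 0 then 0 else (1 - inverse Q ^ (c + 1)) * u (a - 1, b - 1, c + 1, d)))"

lemma G21: "G4 Q X21 u (a, b, c, d) = (if a = 0 then 0 else u (a - 1, b, c, d))"
  by (simp add: G4_def)
lemma G12: "G4 Q X12 u (a, b, c, d) = (if b = 0 then 0 else inverse Q ^ a * u (a, b - 1, c, d))"
  by (simp add: G4_def)
lemma G11: "G4 Q X11 u (a, b, c, d) = (if c = 0 then 0 else inverse Q ^ a * u (a, b, c - 1, d))"
  by (simp add: G4_def)
lemma G22: "G4 Q X22 u (a, b, c, d) = (if d = 0 then 0 else Q ^ b * u (a, b, c, d - 1))
             + (if a = 0 \<or> b = 0 then 0 else (1 - inverse Q ^ (c + 1)) * u (a - 1, b - 1, c + 1, d))"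
  by (simp add: G4_def)

lemmas Gs = G21 G12 G11 G22

lemma pt_ext: "(\<And>a b c d. f (a, b, c, d) = g (a, b, c, d)) \<Longrightarrow> f = g"
  by (rule ext) (metis prod_cases4)

lemma G4_lin: "lin (G4 Q x)"
  unfolding lin_def
  by (intro conjI allI; rule pt_ext; cases x) (simp_all add: Gs algebra_simps)

lemma R1: "G4 Q X11 (G4 Q X12 u) = G4 Q X12 (G4 Q X11 u)"
  by (rule pt_ext) (simp add: Gs)

lemma R2: "G4 Q X21 (G4 Q X22 u) = G4 Q X22 (G4 Q X21 u)"
  by (rule pt_ext) (simp add: Gs)

lemma R4: assumes "Q \<noteq> 0"
  shows "G4 Q X11 (G4 Q X21 u) = (\<lambda>m. inverse Q * G4 Q X21 (G4 Q X11 u) m)"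
proof (rule pt_ext)
  fix a b c d
  show "G4 Q X11 (G4 Q X21 u) (a, b, c, d) = inverse Q * G4 Q X21 (G4 Q X11 u) (a, b, c, d)"
    by (cases a) (simp_all add: Gs)
qed

lemma R5: assumes "Q \<noteq> 0"
  shows "G4 Q X12 (G4 Q X22 u) = (\<lambda>m. inverse Q * G4 Q X22 (G4 Q X12 u) m)"
proof (rule pt_ext)
  fix a b c d
  show "G4 Q X12 (G4 Q X22 u) (a, b, c, d) = inverse Q * G4 Q X22 (G4 Q X12 u) (a, b, c, d)"
    using assms by (cases a; cases b) (simp_all add: Gs algebra_simps)
qed

lemma R6: assumes "Q \<noteq> 0"
  shows "G4 Q X21 (G4 Q X12 u) = (\<lambda>m. Q * G4 Q X12 (G4 Q X21 u) m)"
proof (rule pt_ext)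
  fix a b c d
  show "G4 Q X21 (G4 Q X12 u) (a, b, c, d) = Q * G4 Q X12 (G4 Q X21 u) (a, b, c, d)"
    using assms by (cases a) (simp_all add: Gs)
qed

lemma R3: assumes "Q \<noteq> 0"
  shows "G4 Q X11 (G4 Q X22 u) (a, b, c, d) - G4 Q X22 (G4 Q X11 u) (a, b, c, d)
       + (G4 Q X21 (G4 Q X12 u) (a, b, c, d) - G4 Q X12 (G4 Q X21 u) (a, b, c, d)) = 0"
  using assms by (cases a; cases b; cases c; cases d) (simp_all add: Gs algebra_simps)


lemma pp_inv: "q \<noteq> 0 \<Longrightarrow> pp q = inverse (QQ q)"
proof -
  have "q powi (-2) = inverse (q^2)" by (simp add: power_int_minus)
  then show ?thesis unfolding pp_def QQ_def by (simp only: of_real_inverse)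
qed
lemma QQ_nz: "q \<noteq> 0 \<Longrightarrow> QQ q \<noteq> 0"
  by (simp add: QQ_def)

lemmas repm = rep_mult[OF G4_lin]

lemma minus_fun_pt: "(f - g) m = f m - (g :: 'a \<Rightarrow> complex) m" by simp

lemma rep_rel:
  assumes q: "q \<noteq> 0" and r: "r \<in> rels_I q"
  shows "rep (G4 (QQ q)) r u = 0"
proof -
  let ?Q = "QQ q"
  have Q: "?Q \<noteq> 0" using QQ_nz[OF q] .
  have pp: "pp q = inverse ?Q" using pp_inv[OF q] .
  have r': "r \<in> {gc * gb - gb * gc, ga * gd - gd * ga, (gc * gd - gd * gc) + (ga * gb - gb * ga),
       gc * ga - scal (pp q) * (ga * gc), gb * gd - scal (pp q) * (gd * gb), ga * gb - scal ?Q * (gb * ga)}"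
    using r by (simp add: rels_I_def Let_def pp_def QQ_def)
  have 1: "rep (G4 ?Q) (gc * gb - gb * gc) u = 0"
    by (simp add: rep_diff repm rep_gen R1)
  have 2: "rep (G4 ?Q) (ga * gd - gd * ga) u = 0"
    by (simp add: rep_diff repm rep_gen R2)
  have 3: "rep (G4 ?Q) ((gc * gd - gd * gc) + (ga * gb - gb * ga)) u = 0"
    by (simp add: rep_add rep_diff repm rep_gen) (rule pt_ext, simp add: R3[OF Q])
  have 4: "rep (G4 ?Q) (gc * ga - scal (pp q) * (ga * gc)) u = 0"
    by (simp add: rep_diff repm rep_gen rep_scal R4[OF Q] pp)
  have 5: "rep (G4 ?Q) (gb * gd - scal (pp q) * (gd * gb)) u = 0"
    by (simp add: rep_diff repm rep_gen rep_scal R5[OF Q] pp)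
  have 6: "rep (G4 ?Q) (ga * gb - scal ?Q * (gb * ga)) u = 0"
    by (simp add: rep_diff repm rep_gen rep_scal R6[OF Q])
  show ?thesis using r' 1 2 3 4 5 6 by blast
qed

lemma rep_ideal:
  assumes q: "q \<noteq> 0" and f: "f \<in> ideal_I q"
  shows "rep (G4 (QQ q)) f u = 0"
  using f
proof (induction f arbitrary: u rule: ideal_I.induct)
  case (gen r) then show ?case using rep_rel[OF q] by blast
next
  case zero then show ?case by (simp add: rep_zero)
next
  case (add a b) then show ?case by (simp add: rep_add)
next
  case (lmult a c)
  have L: "lin (rep (G4 (QQ q)) c)" by (rule rep_lin[OF G4_lin])
  have "rep (G4 (QQ q)) (c * a) u = rep (G4 (QQ q)) c (rep (G4 (QQ q)) a u)" by (rule repm)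
  also have "rep (G4 (QQ q)) a u = 0" by (rule lmult.IH)
  also have "rep (G4 (QQ q)) c 0 = 0" by (rule lin_zero[OF L])
  finally show ?case .
next
  case (rmult a c) then show ?case by (simp add: repm)
qed

definition E :: "pt \<Rightarrow> pt \<Rightarrow> complex" where "E m = (\<lambda>m'. if m' = m then 1 else 0)"

definition Phi :: "complex \<Rightarrow> falg \<Rightarrow> pt \<Rightarrow> complex" where "Phi Q f = rep (G4 Q) f (E (0, 0, 0, 0))"

lemma wop_replicate: "wop G (replicate n x) = G x ^^ n"
  by (induction n) auto

lemma st22: "G4 Q X22 (E (0, 0, 0, d)) = E (0, 0, 0, Suc d)"
  by (rule pt_ext) (auto simp: Gs E_def)
lemma st11: "G4 Q X11 (E (0, 0, c, d)) = E (0, 0, Suc c, d)"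
  by (rule pt_ext) (auto simp: Gs E_def)
lemma st12: "G4 Q X12 (E (0, b, c, d)) = E (0, Suc b, c, d)"
  by (rule pt_ext) (auto simp: Gs E_def)
lemma st21: "G4 Q X21 (E (a, b, c, d)) = E (Suc a, b, c, d)"
  by (rule pt_ext) (auto simp: Gs E_def)

lemma pw22: "(G4 Q X22 ^^ d) (E (0, 0, 0, 0)) = E (0, 0, 0, d)"
  by (induction d) (auto simp: st22)
lemma pw11: "(G4 Q X11 ^^ c) (E (0, 0, 0, d)) = E (0, 0, c, d)"
  by (induction c) (auto simp: st11)
lemma pw12: "(G4 Q X12 ^^ b) (E (0, 0, c, d)) = E (0, b, c, d)"
  by (induction b) (auto simp: st12)
lemma pw21: "(G4 Q X21 ^^ a) (E (0, b, c, d)) = E (a, b, c, d)"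
  by (induction a) (auto simp: st21)

lemma wop_pbw: "wop (G4 Q) (unW (pbw m)) (E (0, 0, 0, 0)) = E m"
proof -
  obtain a b c d where m: "m = (a, b, c, d)" by (cases m) auto
  show ?thesis by (simp add: m wop_append wop_replicate pw22 pw11 pw12 pw21)
qed

lemma Phi_add: "Phi Q (f + g) = Phi Q f + Phi Q g" by (simp add: Phi_def rep_add)

lemma Phi_scal_pmono: "Phi Q (scal c * pmono m) = (\<lambda>m'. c * E m m')"
  by (simp add: Phi_def repm rep_scal pmono_def rep_single wop_pbw)

lemma Phi_PB: assumes "PB g" shows "Phi Q g m = Poly_Mapping.lookup g (pbw m)"
  using assms
proof (rule PB_induct)
  show "Phi Q 0 m = Poly_Mapping.lookup 0 (pbw m)" by (simp add: Phi_def rep_zero)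
next
  fix f m0 c assume "Phi Q f m = Poly_Mapping.lookup f (pbw m)"
  moreover have "Poly_Mapping.lookup (scal c * pmono m0) (pbw m) = c * E m0 m"
    by (auto simp: lookup_scal pmono_def lookup_single E_def when_def dest: pbw_inj)
  ultimately show "Phi Q (f + scal c * pmono m0) m = Poly_Mapping.lookup (f + scal c * pmono m0) (pbw m)"
    by (simp add: Phi_add Phi_scal_pmono lookup_add)
qed

lemma PB_zero_if: assumes "PB g" "\<And>m. Poly_Mapping.lookup g (pbw m) = 0" shows "g = 0"
proof -
  have "False" if k: "k \<in> Poly_Mapping.keys g" for k
  proof -
    obtain m where "k = pbw m" using assms(1) k unfolding PB_def by blast
    then show False using k assms(2)[of m] by (simp add: in_keys_iff)
  qed
  then have "Poly_Mapping.keys g = {}" by blast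
  then show ?thesis by simp
qed

lemma length_pbw: "length (unW (pbw (a, b, c, d))) \<ge> a" by simp


lemma sum_fun_pt: "(sum F S) m = (\<Sum>s\<in>S. F s m)"
  by (induction S rule: infinite_finite_induct) auto

lemma rep_sum: "rep G (sum F S) u = sum (\<lambda>s. rep G (F s) u) S"
  by (induction S rule: infinite_finite_induct) (auto simp: rep_zero rep_add)

lemma Phi_tens: "Phi Q (tens A 1 g k) = (\<lambda>m. \<Sum>l\<in>UNIV. A $ k $ l * Phi Q (g l) m)"
  by (rule ext) (simp add: tens_def Phi_def rep_sum sum_fun_pt repm rep_scal)

lemma tens_diff: "tens A x (\<lambda>k. g k - g' k) k = tens A x g k - tens A x g' k"
  by (simp add: tens_def right_diff_distrib sum_subtractf)

lemma core:
  fixes B :: "complex^'n^'n" and g :: "'n \<Rightarrow> falg"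
  assumes q: "q \<noteq> 0" and h: "\<And>k. tens B 1 g k - ga * g k \<in> ideal_I q"
  shows "g k \<in> ideal_I q"
proof -
  let ?Q = "QQ q"
  have "\<forall>k. \<exists>G. PB G \<and> cg q (g k) G" using SP_all[OF q] by (auto simp: SP_def)
  then obtain GG where GG: "\<And>k. PB (GG k)" "\<And>k. cg q (g k) (GG k)" by metis
  define u where "u k = Phi ?Q (g k)" for k
  have u_eq: "u k = Phi ?Q (GG k)" for k
  proof -
    have "rep (G4 ?Q) (g k - GG k) (E (0,0,0,0)) = 0"
      using rep_ideal[OF q] GG(2)[of k] by (simp add: cg_def)
    then show ?thesis by (simp add: u_def Phi_def rep_diff)
  qed
  have u_lk: "u k m = Poly_Mapping.lookup (GG k) (pbw m)" for k m
    using u_eq Phi_PB[OF GG(1)] by simp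
  have rel: "u k (a, b, c, d) = (\<Sum>l\<in>UNIV. B $ k $ l * u l (Suc a, b, c, d))" for k a b c d
  proof -
    have "rep (G4 ?Q) (tens B 1 g k - ga * g k) (E (0,0,0,0)) = 0"
      using rep_ideal[OF q h] .
    then have "Phi ?Q (tens B 1 g k) - G4 ?Q X21 (u k) = 0"
      by (simp add: Phi_def rep_diff repm rep_gen u_def)
    then have "Phi ?Q (tens B 1 g k) (Suc a, b, c, d) - G4 ?Q X21 (u k) (Suc a, b, c, d) = 0"
      by (metis minus_apply zero_fun_apply)
    then show ?thesis by (simp add: Phi_tens G21 u_def)
  qed
  define S where "S = (\<Union>k. Poly_Mapping.keys (GG k))"
  have finS: "finite S" unfolding S_def by simp
  define N where "N = Max (insert 0 ((\<lambda>w. length (unW w)) ` S))"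
  have big: "u k (a, b, c, d) = 0" if "a > N" for k a b c d
  proof (rule ccontr)
    assume "u k (a, b, c, d) \<noteq> 0"
    then have "pbw (a, b, c, d) \<in> S" by (auto simp: u_lk S_def in_keys_iff)
    then have mem: "length (unW (pbw (a, b, c, d))) \<in> insert 0 ((\<lambda>w. length (unW w)) ` S)"
      by (rule insertI2[OF imageI])
    have fin2: "finite (insert 0 ((\<lambda>w. length (unW w)) ` S))" using finS by simp
    have "length (unW (pbw (a, b, c, d))) \<le> N" unfolding N_def by (rule Max_ge[OF fin2 mem])
    moreover have "length (unW (pbw (a, b, c, d))) \<ge> a" by simp
    ultimately show False using that by simp
  qed
  have desc: "\<forall>a. a + j > N \<longrightarrow> (\<forall>k b c d. u k (a, b, c, d) = 0)" for j
  proof (induction j)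
    case 0 then show ?case using big by simp
  next
    case (Suc j)
    show ?case
    proof (intro allI impI)
      fix a k b c d assume a: "a + Suc j > N"
      show "u k (a, b, c, d) = 0"
      proof (cases "a > N")
        case True then show ?thesis using big by simp
      next
        case False
        have "\<forall>l. u l (Suc a, b, c, d) = 0" using Suc a by auto
        then show ?thesis by (simp add: rel[of k a b c d])
      qed
    qed
  qed
  have "u k m = 0" for m
  proof -
    obtain a b c d where m: "m = (a, b, c, d)" by (cases m) auto
    show ?thesis using desc[of "Suc N"] m by auto
  qed
  then have "GG k = 0" using PB_zero_if[OF GG(1)] u_lk by metis
  then show ?thesis using GG(2)[of k] by (simp add: cg_def)
qed

lemma alpha_inj:
  fixes B1 B2 :: "complex^'n^'n" and j :: "complex^'n^'m"
  assumes q: "q \<noteq> 0"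
  shows "alpha_I_injective q B1 B2 j"
  unfolding alpha_I_injective_def
proof (intro allI impI)
  fix g g' :: "'n \<Rightarrow> falg"
  assume "case (alpha_I B1 B2 j g, alpha_I B1 B2 j g') of
          ((a, b, c), a', b', c') \<Rightarrow> zero_mod q (\<lambda>k. a k - a' k) \<and> zero_mod q (\<lambda>k. b k - b' k) \<and> zero_mod q (\<lambda>k. c k - c' k)"
  then have h: "\<And>k. (tens B1 1 g k - ga * g k) - (tens B1 1 g' k - ga * g' k) \<in> ideal_I q"
    by (simp add: alpha_I_def zero_mod_def)
  have h2: "tens B1 1 (\<lambda>k. g k - g' k) k - ga * (g k - g' k) \<in> ideal_I q" for k
    using h[of k] by (simp add: tens_diff right_diff_distrib algebra_simps)
  show "zero_mod q (\<lambda>k. g k - g' k)"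
    unfolding zero_mod_def using core[OF q h2] by blast
qed


definition mv :: "complex^'n^'n \<Rightarrow> ('n \<Rightarrow> complex) \<Rightarrow> ('n \<Rightarrow> complex)" where
  "mv A u = (\<lambda>k. \<Sum>l\<in>UNIV. A $ k $ l * u l)"

definition GB :: "complex^'n^'n \<Rightarrow> complex^'n^'n \<Rightarrow> gen \<Rightarrow> ('n \<Rightarrow> complex) \<Rightarrow> ('n \<Rightarrow> complex)" where
  "GB B1 B2 x u = (case x of X21 \<Rightarrow> mv B1 u | X22 \<Rightarrow> mv B2 u | _ \<Rightarrow> (\<lambda>k. 0))"

lemma mv_lin: "lin (mv A)"
  unfolding lin_def mv_def by (auto simp: fun_eq_iff distrib_left sum.distrib sum_distrib_left mult.left_commute)

lemma GB_simps: "GB B1 B2 X21 = mv B1" "GB B1 B2 X22 = mv B2" "GB B1 B2 X11 = (\<lambda>u k. 0)" "GB B1 B2 X12 = (\<lambda>u k. 0)"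
  by (auto simp: GB_def fun_eq_iff)

lemma GB_lin: "lin (GB B1 B2 x)"
proof (cases x)
  case X11 then show ?thesis by (simp add: GB_simps lin_def fun_eq_iff)
next
  case X12 then show ?thesis by (simp add: GB_simps lin_def fun_eq_iff)
next
  case X21 then show ?thesis by (simp add: GB_simps mv_lin)
next
  case X22 then show ?thesis by (simp add: GB_simps mv_lin)
qed

lemma mv_zero: "mv A (\<lambda>k. 0) = (\<lambda>k. 0)" by (simp add: mv_def)

lemma vl_mv: "vec_lambda (mv A u) = A *v vec_lambda u"
  by (simp add: vec_eq_iff mv_def matrix_vector_mult_def)

lemma mat_diff_mv: "(A - B) *v x = A *v x - B *v (x :: complex^'n)"
  by (simp add: vec_eq_iff matrix_vector_mult_def sum_subtractf algebra_simps)

lemma mat_neg_mv: "(- A) *v x = - (A *v (x :: complex^'n))"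
  by (simp add: vec_eq_iff matrix_vector_mult_def sum_negf)

locale invS =
  fixes S :: "(complex^'n) set" and B1 B2 :: "complex^'n^'n" and i :: "complex^'m^'n" and j :: "complex^'n^'m"
  assumes sub: "vec.subspace S"
    and inv1: "(\<lambda>v. B1 *v v) ` S \<subseteq> S" and inv2: "(\<lambda>v. B2 *v v) ` S \<subseteq> S"
    and rng: "range (\<lambda>w. i *v w) \<subseteq> S"
    and comm: "B1 ** B2 - B2 ** B1 + i ** j = 0"
begin

definition SF :: "('n \<Rightarrow> complex) set" where "SF = {u. vec_lambda u \<in> S}"

lemma SF_zero: "(\<lambda>k. 0) \<in> SF"
proof -
  have "vec_lambda (\<lambda>k. 0) = (0 :: complex^'n)" by (simp add: vec_eq_iff)
  then show ?thesis using vec.subspace_0[OF sub] by (simp add: SF_def)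
qed
lemma SF_zero': "0 \<in> SF" using SF_zero by (simp add: zero_fun_def)

lemma SF_add: "u \<in> SF \<Longrightarrow> v \<in> SF \<Longrightarrow> u + v \<in> SF"
proof -
  assume "u \<in> SF" "v \<in> SF"
  moreover have "vec_lambda (u + v) = vec_lambda u + vec_lambda v" by (simp add: vec_eq_iff)
  ultimately show ?thesis using vec.subspace_add[OF sub] by (simp add: SF_def)
qed

lemma SF_smult: "u \<in> SF \<Longrightarrow> (\<lambda>m. c * u m) \<in> SF"
proof -
  assume "u \<in> SF"
  moreover have "vec_lambda (\<lambda>m. c * u m) = c *s vec_lambda u" by (simp add: vec_eq_iff)
  ultimately show ?thesis using vec.subspace_scale[OF sub] by (simp add: SF_def)
qed

lemma SF_neg: "u \<in> SF \<Longrightarrow> - u \<in> SF"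
proof -
  assume "u \<in> SF"
  moreover have "(\<lambda>m. (-1) * u m) = - u" by (simp add: fun_eq_iff)
  ultimately show ?thesis using SF_smult[of u "-1"] by simp
qed

lemma SF_diff: "u \<in> SF \<Longrightarrow> v \<in> SF \<Longrightarrow> u - v \<in> SF"
  using SF_add[of u "- v"] SF_neg[of v] by simp

lemma SF_sum: "(\<And>s. s \<in> F \<Longrightarrow> U s \<in> SF) \<Longrightarrow> sum U F \<in> SF"
  by (induction F rule: infinite_finite_induct) (auto intro: SF_zero' SF_add)

lemma SF_mv1: "u \<in> SF \<Longrightarrow> mv B1 u \<in> SF"
  using inv1 by (auto simp: SF_def vl_mv)
lemma SF_mv2: "u \<in> SF \<Longrightarrow> mv B2 u \<in> SF"
  using inv2 by (auto simp: SF_def vl_mv)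

lemma SF_GB: "u \<in> SF \<Longrightarrow> GB B1 B2 x u \<in> SF"
  by (cases x) (auto simp: GB_def SF_mv1 SF_mv2 SF_zero)

lemma SF_wop: "u \<in> SF \<Longrightarrow> wop (GB B1 B2) w u \<in> SF"
  by (induction w arbitrary: u) (auto simp: SF_GB)

lemma rep_as_sum: "rep G f u = (\<Sum>w\<in>Poly_Mapping.keys f. (\<lambda>m. Poly_Mapping.lookup f w * wop G (unW w) u m))"
  by (simp add: rep_def fun_eq_iff sum_fun_pt)

lemma SF_rep: "u \<in> SF \<Longrightarrow> rep (GB B1 B2) f u \<in> SF"
  unfolding rep_as_sum by (intro SF_sum SF_smult SF_wop)

lemma SF_col: "(\<lambda>k. i $ k $ l) \<in> SF"
proof -
  have "vec_lambda (\<lambda>k. i $ k $ l) = i *v axis l 1"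
    by (simp add: vec_eq_iff matrix_vector_mult_def axis_def if_distrib cong: if_cong)
  then show ?thesis using rng by (auto simp: SF_def)
qed

lemma SF_comm: "mv B1 (mv B2 u) - mv B2 (mv B1 u) \<in> SF"
proof -
  have e: "B1 ** B2 - B2 ** B1 = - (i ** j)" using comm by (simp add: algebra_simps eq_neg_iff_add_eq_0)
  have "vec_lambda (mv B1 (mv B2 u) - mv B2 (mv B1 u)) = B1 *v (B2 *v vec_lambda u) - B2 *v (B1 *v vec_lambda u)"
    by (simp add: vec_eq_iff vl_mv[symmetric])
  also have "\<dots> = (B1 ** B2 - B2 ** B1) *v vec_lambda u"
    by (simp add: matrix_vector_mul_assoc mat_diff_mv)
  also have "\<dots> = - (i *v (j *v vec_lambda u))"
    by (simp add: e mat_neg_mv matrix_vector_mul_assoc)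
  finally show ?thesis using rng vec.subspace_neg[OF sub] by (auto simp: SF_def)
qed

lemma SF_comm': "mv B2 (mv B1 u) - mv B1 (mv B2 u) \<in> SF"
  using SF_neg[OF SF_comm[of u]] by simp


lemma rep_GB_mult: "rep (GB B1 B2) (f * g) u = rep (GB B1 B2) f (rep (GB B1 B2) g u)"
  by (rule rep_mult[OF GB_lin])

lemma SF_ideal: "f \<in> ideal_I q \<Longrightarrow> rep (GB B1 B2) f u \<in> SF"
proof (induction f arbitrary: u rule: ideal_I.induct)
  case (gen r)
  let ?R = "rep (GB B1 B2)"
  have "r \<in> {gc * gb - gb * gc, ga * gd - gd * ga, (gc * gd - gd * gc) + (ga * gb - gb * ga),
       gc * ga - scal (pp q) * (ga * gc), gb * gd - scal (pp q) * (gd * gb), ga * gb - scal (QQ q) * (gb * ga)}"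
    using gen by (simp add: rels_I_def Let_def pp_def QQ_def)
  moreover have "?R (gc * gb - gb * gc) u \<in> SF"
  proof -
    have "?R (gc * gb - gb * gc) u = (\<lambda>k. 0)"
      by (simp add: rep_diff rep_GB_mult rep_gen GB_simps fun_eq_iff)
    then show ?thesis using SF_zero by simp
  qed
  moreover have "?R (ga * gd - gd * ga) u \<in> SF"
  proof -
    have "?R (ga * gd - gd * ga) u = mv B1 (mv B2 u) - mv B2 (mv B1 u)"
      by (simp add: rep_diff rep_GB_mult rep_gen GB_simps)
    then show ?thesis using SF_comm[of u] by (simp only:)
  qed
  moreover have "?R ((gc * gd - gd * gc) + (ga * gb - gb * ga)) u \<in> SF"
  proof -
    have "?R ((gc * gd - gd * gc) + (ga * gb - gb * ga)) u = (\<lambda>k. 0)"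
      by (simp add: rep_add rep_diff rep_GB_mult rep_gen GB_simps fun_eq_iff mv_def)
    then show ?thesis using SF_zero by simp
  qed
  moreover have "?R (gc * ga - scal (pp q) * (ga * gc)) u \<in> SF"
  proof -
    have "?R (gc * ga - scal (pp q) * (ga * gc)) u = (\<lambda>k. 0)"
      by (simp add: rep_diff rep_GB_mult rep_gen rep_scal GB_simps fun_eq_iff mv_def)
    then show ?thesis using SF_zero by simp
  qed
  moreover have "?R (gb * gd - scal (pp q) * (gd * gb)) u \<in> SF"
  proof -
    have "?R (gb * gd - scal (pp q) * (gd * gb)) u = (\<lambda>k. 0)"
      by (simp add: rep_diff rep_GB_mult rep_gen rep_scal GB_simps fun_eq_iff mv_def)
    then show ?thesis using SF_zero by simp
  qed
  moreover have "?R (ga * gb - scal (QQ q) * (gb * ga)) u \<in> SF"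
  proof -
    have "?R (ga * gb - scal (QQ q) * (gb * ga)) u = (\<lambda>k. 0)"
      by (simp add: rep_diff rep_GB_mult rep_gen rep_scal GB_simps fun_eq_iff mv_def)
    then show ?thesis using SF_zero by simp
  qed
  ultimately show ?case by blast
next
  case zero then show ?case using SF_zero by (simp add: rep_zero)
next
  case (add a b) show ?case using SF_add[OF add.IH(1) add.IH(2)] by (simp only: rep_add)
next
  case (lmult a c) then show ?case by (simp add: rep_GB_mult SF_rep)
next
  case (rmult a c) then show ?case by (simp add: rep_GB_mult)
qed

lemma comm_wop:
  assumes LY: "lin Y" and PY: "\<And>v. v \<in> SF \<Longrightarrow> Y v \<in> SF"
    and CY: "\<And>x v. Y (GB B1 B2 x v) - GB B1 B2 x (Y v) \<in> SF"
  shows "Y (wop (GB B1 B2) w u) - wop (GB B1 B2) w (Y u) \<in> SF"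
proof (induction w arbitrary: u)
  case Nil show ?case using SF_zero' by (simp only: wop.simps(1) id_apply diff_self)
next
  case (Cons x w)
  let ?W = "wop (GB B1 B2) w"
  have e: "Y (GB B1 B2 x (?W u)) - GB B1 B2 x (?W (Y u))
      = (Y (GB B1 B2 x (?W u)) - GB B1 B2 x (Y (?W u))) + GB B1 B2 x (Y (?W u) - ?W (Y u))"
    by (simp add: lin_diff[OF GB_lin])
  have B: "GB B1 B2 x (Y (?W u) - ?W (Y u)) \<in> SF" by (rule SF_GB[OF Cons])
  show ?case unfolding wop.simps o_apply e by (rule SF_add[OF CY B])
qed

lemma comm_rep:
  assumes LY: "lin Y" and PY: "\<And>v. v \<in> SF \<Longrightarrow> Y v \<in> SF"
    and CY: "\<And>x v. Y (GB B1 B2 x v) - GB B1 B2 x (Y v) \<in> SF"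
  shows "Y (rep (GB B1 B2) f u) - rep (GB B1 B2) f (Y u) \<in> SF"
proof -
  let ?c = "Poly_Mapping.lookup f" and ?W = "\<lambda>w. wop (GB B1 B2) (unW w)"
  have "Y (rep (GB B1 B2) f u) = (\<Sum>w\<in>Poly_Mapping.keys f. (\<lambda>m. ?c w * Y (?W w u) m))"
    unfolding rep_as_sum by (simp add: lin_sum[OF LY] lin_smult[OF LY])
  moreover have "rep (GB B1 B2) f (Y u) = (\<Sum>w\<in>Poly_Mapping.keys f. (\<lambda>m. ?c w * ?W w (Y u) m))"
    unfolding rep_as_sum by simp
  ultimately have "Y (rep (GB B1 B2) f u) - rep (GB B1 B2) f (Y u)
      = (\<Sum>w\<in>Poly_Mapping.keys f. (\<lambda>m. ?c w * (Y (?W w u) - ?W w (Y u)) m))"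
    by (simp add: sum_subtractf[symmetric] right_diff_distrib fun_eq_iff sum_fun_pt)
  also have "\<dots> \<in> SF"
    by (intro SF_sum SF_smult comm_wop[OF LY PY CY])
  finally show ?thesis .
qed

lemma comm_B2: "mv B2 (rep (GB B1 B2) f u) - rep (GB B1 B2) f (mv B2 u) \<in> SF"
proof (rule comm_rep[OF mv_lin SF_mv2])
  fix x v show "mv B2 (GB B1 B2 x v) - GB B1 B2 x (mv B2 v) \<in> SF"
    by (cases x) (simp_all add: GB_simps SF_comm' mv_zero SF_zero')
qed

lemma comm_B1: "mv B1 (rep (GB B1 B2) f u) - rep (GB B1 B2) f (mv B1 u) \<in> SF"
proof (rule comm_rep[OF mv_lin SF_mv1])
  fix x v show "mv B1 (GB B1 B2 x v) - GB B1 B2 x (mv B1 v) \<in> SF"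
    by (cases x) (simp_all add: GB_simps SF_comm mv_zero SF_zero')
qed

definition ee :: "'n \<Rightarrow> 'n \<Rightarrow> complex" where "ee k = (\<lambda>k'. if k' = k then 1 else 0)"

definition Th :: "('n \<Rightarrow> falg) \<Rightarrow> ('n \<Rightarrow> complex)" where
  "Th g = (\<Sum>k\<in>UNIV. rep (GB B1 B2) (g k) (ee k))"

lemma Th_add: "Th (\<lambda>k. g k + g' k) = Th g + Th g'"
  by (simp add: Th_def rep_add sum.distrib)
lemma Th_diff: "Th (\<lambda>k. g k - g' k) = Th g - Th g'"
  by (simp add: Th_def rep_diff sum_subtractf)
lemma Th_neg: "Th (\<lambda>k. - g k) = - Th g"
  by (simp add: Th_def rep_uminus sum_negf)

lemma Th_ideal: "(\<And>k. g k \<in> ideal_I q) \<Longrightarrow> Th g \<in> SF"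
  unfolding Th_def by (intro SF_sum SF_ideal) auto

lemma lin_col: assumes "lin T"
  shows "T (\<lambda>m. A $ m $ l) = (\<Sum>k\<in>UNIV. (\<lambda>m. A $ k $ l * T (ee k) m))"
proof -
  have "(\<lambda>m. A $ m $ l) = (\<Sum>k\<in>UNIV. (\<lambda>m. A $ k $ l * ee k m))"
    by (simp add: fun_eq_iff sum_fun_pt ee_def if_distrib cong: if_cong)
  then show ?thesis by (simp add: lin_sum[OF assms] lin_smult[OF assms])
qed

lemma Th_tens: "Th (\<lambda>k. tens A 1 g k) = (\<Sum>l\<in>UNIV. rep (GB B1 B2) (g l) (\<lambda>m. A $ m $ l))"
proof -
  have "Th (\<lambda>k. tens A 1 g k) = (\<Sum>k\<in>UNIV. \<Sum>l\<in>UNIV. (\<lambda>m. A $ k $ l * rep (GB B1 B2) (g l) (ee k) m))"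
    by (simp add: Th_def tens_def rep_sum rep_GB_mult rep_scal)
  also have "\<dots> = (\<Sum>l\<in>UNIV. \<Sum>k\<in>UNIV. (\<lambda>m. A $ k $ l * rep (GB B1 B2) (g l) (ee k) m))"
    by (rule sum.swap)
  also have "\<dots> = (\<Sum>l\<in>UNIV. rep (GB B1 B2) (g l) (\<lambda>m. A $ m $ l))"
    by (simp add: lin_col[OF rep_lin[OF GB_lin]])
  finally show ?thesis .
qed

lemma Th_gen: "Th (\<lambda>k. gen_el x * g k) = (\<Sum>l\<in>UNIV. GB B1 B2 x (rep (GB B1 B2) (g l) (ee l)))"
  by (simp add: Th_def rep_GB_mult rep_gen)

lemma mv_ee: "mv A (ee l) = (\<lambda>m. A $ m $ l)"
  by (simp add: mv_def ee_def fun_eq_iff if_distrib cong: if_cong)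

lemma Th_scal: "Th (\<lambda>k. scal (v $ k)) = (\<lambda>m. v $ m)"
  by (simp add: Th_def rep_scal fun_eq_iff sum_fun_pt ee_def if_distrib cong: if_cong)

lemma Th_beta: "Th (beta_I B1 B2 i f) \<in> SF"
proof -
  obtain a b c where f: "f = (a, b, c)" by (cases f) auto
  have e: "Th (beta_I B1 B2 i f) =
     (Th (\<lambda>k. gd * a k) - Th (\<lambda>k. tens B2 1 a k)) + (Th (\<lambda>k. tens B1 1 b k) - Th (\<lambda>k. ga * b k))
     + Th (\<lambda>k. tens i 1 c k)"
    by (simp add: f beta_I_def Th_add Th_diff Th_neg)
  have 1: "Th (\<lambda>k. gd * a k) - Th (\<lambda>k. tens B2 1 a k) \<in> SF"
  proof -
    have "Th (\<lambda>k. gd * a k) - Th (\<lambda>k. tens B2 1 a k)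
       = (\<Sum>l\<in>UNIV. mv B2 (rep (GB B1 B2) (a l) (ee l)) - rep (GB B1 B2) (a l) (mv B2 (ee l)))"
      by (simp add: Th_gen Th_tens GB_simps mv_ee sum_subtractf)
    also have "\<dots> \<in> SF" by (intro SF_sum comm_B2)
    finally show ?thesis .
  qed
  have 2: "Th (\<lambda>k. tens B1 1 b k) - Th (\<lambda>k. ga * b k) \<in> SF"
  proof -
    have "Th (\<lambda>k. tens B1 1 b k) - Th (\<lambda>k. ga * b k)
       = - (\<Sum>l\<in>UNIV. mv B1 (rep (GB B1 B2) (b l) (ee l)) - rep (GB B1 B2) (b l) (mv B1 (ee l)))"
      by (simp add: Th_gen Th_tens GB_simps mv_ee sum_subtractf)
    also have "\<dots> \<in> SF" by (intro SF_neg SF_sum comm_B1)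
    finally show ?thesis .
  qed
  have 3: "Th (\<lambda>k. tens i 1 c k) \<in> SF"
    unfolding Th_tens by (intro SF_sum SF_rep SF_col)
  show ?thesis unfolding e using 1 2 3 SF_add by blast
qed

lemma not_surj:
  assumes v: "v \<notin> S"
  shows "\<not> beta_I_surjective q B1 B2 i"
proof
  assume "beta_I_surjective q B1 B2 i"
  then have "\<exists>f. zero_mod q (\<lambda>k. beta_I B1 B2 i f k - (\<lambda>k. scal (v $ k)) k)"
    unfolding beta_I_surjective_def by (rule allE)
  then obtain f where f: "zero_mod q (\<lambda>k. beta_I B1 B2 i f k - scal (v $ k))" by auto
  have "Th (\<lambda>k. beta_I B1 B2 i f k - scal (v $ k)) \<in> SF"
    using f unfolding zero_mod_def by (intro Th_ideal) auto
  then have "Th (beta_I B1 B2 i f) - Th (\<lambda>k. scal (v $ k)) \<in> SF" by (simp add: Th_diff)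
  then have "Th (beta_I B1 B2 i f) - (Th (beta_I B1 B2 i f) - Th (\<lambda>k. scal (v $ k))) \<in> SF"
    using Th_beta SF_diff by blast
  then have "(\<lambda>m. v $ m) \<in> SF" by (simp add: Th_scal)
  then show False using v by (simp add: SF_def)
qed

end


lemma tens_add: "tens A x (\<lambda>k. g k + g' k) k = tens A x g k + tens A x g' k"
  by (simp add: tens_def distrib_left sum.distrib)
lemma tens_zero: "tens A x (\<lambda>k. 0) k = 0"
  by (simp add: tens_def)
lemma tens_neg: "tens A x (\<lambda>k. - g k) k = - tens A x g k"
  by (simp add: tens_def sum_negf)
lemma tens_vec: "tens A 1 (\<lambda>l. scal (v $ l) * y) k = scal ((A *v v) $ k) * y"
  by (simp add: tens_def matrix_vector_mult_def scal_sum sum_distrib_right scal_mult mult.assoc)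

lemma beta_add: "beta_I B1 B2 i (\<lambda>k. a k + a' k, \<lambda>k. b k + b' k, \<lambda>k. c k + c' k)
   = (\<lambda>k. beta_I B1 B2 i (a, b, c) k + beta_I B1 B2 i (a', b', c') k)"
  by (simp add: beta_I_def tens_add fun_eq_iff distrib_left algebra_simps)

definition TT :: "complex^'n^'n \<Rightarrow> complex^'n^'n \<Rightarrow> complex^'m^'n \<Rightarrow> (complex^'n) set" where
  "TT B1 B2 i = {v. \<forall>y. \<exists>f. beta_I B1 B2 i f = (\<lambda>k. scal (v $ k) * y)}"

lemma TT_sub: "vec.subspace (TT B1 B2 i)"
  unfolding vec.subspace_def
proof (intro conjI ballI allI)
  show "0 \<in> TT B1 B2 i"
    unfolding TT_def
  proof (intro CollectI allI exI)
    fix y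
    show "beta_I B1 B2 i (\<lambda>k. 0, \<lambda>k. 0, \<lambda>k. 0) = (\<lambda>k. scal (0 $ k) * y)"
      by (simp add: beta_I_def tens_zero fun_eq_iff scal_zero)
  qed
next
  fix v w assume v: "v \<in> TT B1 B2 i" and w: "w \<in> TT B1 B2 i"
  show "v + w \<in> TT B1 B2 i"
    unfolding TT_def
  proof (intro CollectI allI)
    fix y
    obtain f1 where f1: "beta_I B1 B2 i f1 = (\<lambda>k. scal (v $ k) * y)" using v unfolding TT_def by blast
    obtain f2 where f2: "beta_I B1 B2 i f2 = (\<lambda>k. scal (w $ k) * y)" using w unfolding TT_def by blast
    obtain a b c where f1e: "f1 = (a, b, c)" by (cases f1) auto
    obtain a' b' c' where f2e: "f2 = (a', b', c')" by (cases f2) auto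
    have "beta_I B1 B2 i (\<lambda>k. a k + a' k, \<lambda>k. b k + b' k, \<lambda>k. c k + c' k) = (\<lambda>k. scal ((v + w) $ k) * y)"
      unfolding beta_add using f1 f2 by (simp add: f1e f2e scal_add distrib_right)
    then show "\<exists>f. beta_I B1 B2 i f = (\<lambda>k. scal ((v + w) $ k) * y)" by blast
  qed
next
  fix c :: complex and v assume v: "v \<in> TT B1 B2 i"
  show "c *s v \<in> TT B1 B2 i"
    unfolding TT_def
  proof (intro CollectI allI)
    fix y
    obtain f where f: "beta_I B1 B2 i f = (\<lambda>k. scal (v $ k) * (scal c * y))" using v unfolding TT_def by blast
    then have "beta_I B1 B2 i f = (\<lambda>k. scal ((c *s v) $ k) * y)"
      by (simp add: scal_scal mult.commute)
    then show "\<exists>f. beta_I B1 B2 i f = (\<lambda>k. scal ((c *s v) $ k) * y)" by blast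
  qed
qed

lemma TT_B1: assumes v: "v \<in> TT B1 B2 i" shows "B1 *v v \<in> TT B1 B2 i"
  unfolding TT_def
proof (intro CollectI allI)
  fix y
  obtain f where f: "beta_I B1 B2 i f = (\<lambda>k. scal (v $ k) * (ga * y))" using v unfolding TT_def by blast
  obtain a b c where fe: "f = (a, b, c)" by (cases f) auto
  define bb where "bb = (\<lambda>l. scal (v $ l) * y)"
  have "beta_I B1 B2 i (\<lambda>k. 0, bb, \<lambda>k. 0) = (\<lambda>k. scal ((B1 *v v) $ k) * y - ga * (scal (v $ k) * y))"
    by (simp add: beta_I_def tens_zero bb_def tens_vec fun_eq_iff)
  then have "beta_I B1 B2 i (\<lambda>k. a k + 0, \<lambda>k. b k + bb k, \<lambda>k. c k + 0) = (\<lambda>k. scal ((B1 *v v) $ k) * y)"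
    unfolding beta_add using f by (simp add: fe fun_eq_iff scal_left_commute)
  then show "\<exists>f. beta_I B1 B2 i f = (\<lambda>k. scal ((B1 *v v) $ k) * y)" by blast
qed

lemma TT_B2: assumes v: "v \<in> TT B1 B2 i" shows "B2 *v v \<in> TT B1 B2 i"
  unfolding TT_def
proof (intro CollectI allI)
  fix y
  obtain f where f: "beta_I B1 B2 i f = (\<lambda>k. scal (v $ k) * (gd * y))" using v unfolding TT_def by blast
  obtain a b c where fe: "f = (a, b, c)" by (cases f) auto
  define aa where "aa = (\<lambda>l. - (scal (v $ l) * y))"
  have "beta_I B1 B2 i (aa, \<lambda>k. 0, \<lambda>k. 0) = (\<lambda>k. scal ((B2 *v v) $ k) * y - gd * (scal (v $ k) * y))"
    by (simp add: beta_I_def tens_zero aa_def tens_neg tens_vec fun_eq_iff)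
  then have "beta_I B1 B2 i (\<lambda>k. a k + aa k, \<lambda>k. b k + 0, \<lambda>k. c k + 0) = (\<lambda>k. scal ((B2 *v v) $ k) * y)"
    unfolding beta_add using f by (simp add: fe fun_eq_iff scal_left_commute)
  then show "\<exists>f. beta_I B1 B2 i f = (\<lambda>k. scal ((B2 *v v) $ k) * y)" by blast
qed

lemma TT_i: "i *v w \<in> TT B1 B2 i"
  unfolding TT_def
proof (intro CollectI allI)
  fix y
  have "beta_I B1 B2 i (\<lambda>k. 0, \<lambda>k. 0, \<lambda>l. scal (w $ l) * y) = (\<lambda>k. scal ((i *v w) $ k) * y)"
    by (simp add: beta_I_def tens_zero tens_vec fun_eq_iff)
  then show "\<exists>f. beta_I B1 B2 i f = (\<lambda>k. scal ((i *v w) $ k) * y)" by blast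
qed

lemma stable_surj:
  fixes B1 B2 :: "complex^'n^'n" and i :: "complex^'m^'n" and j :: "complex^'n^'m"
  assumes st: "stable B1 B2 i j"
  shows "beta_I_surjective q B1 B2 i"
proof -
  have TU: "TT B1 B2 i = UNIV"
  proof (rule ccontr)
    assume "TT B1 B2 i \<noteq> UNIV"
    moreover have "(\<lambda>v. B1 *v v) ` TT B1 B2 i \<subseteq> TT B1 B2 i" using TT_B1 by blast
    moreover have "(\<lambda>v. B2 *v v) ` TT B1 B2 i \<subseteq> TT B1 B2 i" using TT_B2 by blast
    moreover have "range (\<lambda>w. i *v w) \<subseteq> TT B1 B2 i" using TT_i by blast
    ultimately show False using st TT_sub unfolding stable_def by blast
  qed
  let ?Im = "{z. \<exists>f. beta_I B1 B2 i f = z}"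
  have Im0: "(\<lambda>k. 0) \<in> ?Im"
    by (rule CollectI, rule exI[of _ "(\<lambda>k. 0, \<lambda>k. 0, \<lambda>k. 0)"]) (simp add: beta_I_def tens_zero fun_eq_iff)
  have Imadd: "z1 \<in> ?Im \<Longrightarrow> z2 \<in> ?Im \<Longrightarrow> (\<lambda>k. z1 k + z2 k) \<in> ?Im" for z1 z2
  proof -
    assume "z1 \<in> ?Im" "z2 \<in> ?Im"
    then obtain f1 f2 where f12: "beta_I B1 B2 i f1 = z1" "beta_I B1 B2 i f2 = z2" by blast
    obtain a b c where "f1 = (a, b, c)" by (cases f1) auto
    moreover obtain a' b' c' where "f2 = (a', b', c')" by (cases f2) auto
    ultimately have "beta_I B1 B2 i (a, b, c) = z1" "beta_I B1 B2 i (a', b', c') = z2" using f12 by auto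
    then show ?thesis using beta_add[of B1 B2 i a a' b b' c c'] by blast
  qed
  have Imsum: "(\<lambda>k'. \<Sum>k\<in>F. Z k k') \<in> ?Im" if "\<And>k. Z k \<in> ?Im" for Z :: "'n \<Rightarrow> 'n \<Rightarrow> falg" and F
  proof (induction F rule: infinite_finite_induct)
    case (infinite A) then show ?case using Im0 by simp
  next
    case empty then show ?case using Im0 by simp
  next
    case (insert x F) then show ?case using Imadd[OF that[of x] insert.IH] by simp
  qed
  show ?thesis
    unfolding beta_I_surjective_def
  proof
    fix h :: "'n \<Rightarrow> falg"
    have "\<And>k. (\<lambda>k'. scal (axis k 1 $ k') * h k) \<in> ?Im"
      using TU unfolding TT_def by blast
    then have "(\<lambda>k'. \<Sum>k\<in>UNIV. scal (axis k 1 $ k') * h k) \<in> ?Im" by (rule Imsum)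
    moreover have "(\<lambda>k'. \<Sum>k\<in>UNIV. scal (axis k 1 $ k') * h k) = h"
    proof -
      have e: "scal (axis k 1 $ k') * h k = (if k = k' then h k' else 0)" for k k'
        by (auto simp: axis_def scal_one scal_zero)
      show ?thesis by (simp only: e sum.delta finite UNIV_I if_True)
    qed
    ultimately obtain f where "beta_I B1 B2 i f = h" by auto
    then have "zero_mod q (\<lambda>k. beta_I B1 B2 i f k - h k)" by (simp add: zero_mod_def I_zero)
    then show "\<exists>f. zero_mod q (\<lambda>k. beta_I B1 B2 i f k - h k)" by blast
  qed
qed

theorem proposition3p9:
  fixes q :: real
    and B1 B2 :: "complex^'n^'n"
    and i :: "complex^'m^'n"
    and j :: "complex^'n^'m"
  assumes "q > 0"
    and "B1 ** B2 - B2 ** B1 + i ** j = 0"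
    and "(B1 ** adj B1 - adj B1 ** B1) + (B2 ** adj B2 - adj B2 ** B2) + i ** adj i - adj j ** j = 0"
  shows "alpha_I_injective q B1 B2 j \<and> (beta_I_surjective q B1 B2 i \<longleftrightarrow> stable B1 B2 i j)"
proof (intro conjI iffI)
  have q: "q \<noteq> 0" using assms(1) by simp
  show "alpha_I_injective q B1 B2 j" by (rule alpha_inj[OF q])
next
  assume su: "beta_I_surjective q B1 B2 i"
  show "stable B1 B2 i j"
    unfolding stable_def
  proof
    assume "\<exists>S. vec.subspace S \<and> S \<noteq> UNIV \<and> (\<lambda>v. B1 *v v) ` S \<subseteq> S \<and> (\<lambda>v. B2 *v v) ` S \<subseteq> S
            \<and> range (\<lambda>w. i *v w) \<subseteq> S"
    then obtain S where S: "vec.subspace S" "S \<noteq> UNIV" "(\<lambda>v. B1 *v v) ` S \<subseteq> S" "(\<lambda>v. B2 *v v) ` S \<subseteq> S"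
      "range (\<lambda>w. i *v w) \<subseteq> S" by blast
    interpret invS S B1 B2 i j
      using S assms(2) by unfold_locales auto
    obtain v where "v \<notin> S" using S(2) by blast
    then show False using not_surj su by blast
  qed
next
  assume "stable B1 B2 i j"
  then show "beta_I_surjective q B1 B2 i" by (rule stable_surj)
qed


end
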